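(* Let a hyperbolic triangle have $e^a,e^b,e^c\in\mathbb{Q}$. Then $\cos\alpha,\cos\beta,\cos\gamma\in\mathbb{Q}$, and there is $r\in\mathbb{Q}$ with $\sin(A)=r\,\Delta_2$, where $\Delta_2=\sin(\alpha)\sinh(b)\sinh(c)=\sin(\beta)\sinh(a)\sinh(c)=\sin(\gamma)\sinh(a)\sinh(b)$. Moreover the following are equivalent: (i) $\Delta_2\in\mathbb{Q}$; (ii) $\sin\alpha,\sin\beta,\sin\gamma\in\mathbb{Q}$; (iii) $\sin A\in\mathbb{Q}$ (and then the triangle is a hyperbolic Heron triangle).
   Context: All triangles are non-degenerate, bounded triangles in the hyperbolic plane (curvature $-1$), with side lengths $a,b,c>0$, opposite angles $\alpha,\beta,\gamma>0$, and area $A=\pi-\alpha-\beta-\gamma$. A hyperbolic Heron triangle is one with $e^a,e^b,e^c\in\mathbb{Q}$ and $\cos,\sin$ of $\alpha,\beta,\gamma,A$ all rational. *)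

theory Defs
  imports Complex_Main
begin

text \<open>A bounded, non-degenerate triangle in the hyperbolic plane (curvature -1),
  described by its side lengths a b c and opposite angles al be ga.
  Such a triangle is characterised (up to isometry) by the hyperbolic law of cosines;
  conversely any data satisfying these relations with angles in (0,pi) is realised by
  a genuine hyperbolic triangle.\<close>
definition hyp_triangle :: "real \<Rightarrow> real \<Rightarrow> real \<Rightarrow> real \<Rightarrow> real \<Rightarrow> real \<Rightarrow> bool" where
  "hyp_triangle a b c al be ga \<longleftrightarrow>
     0 < a \<and> 0 < b \<and> 0 < c \<and>
     0 < al \<and> al < pi \<and> 0 < be \<and> be < pi \<and> 0 < ga \<and> ga < pi \<and>
     cosh a = cosh b * cosh c - sinh b * sinh c * cos al \<and>
     cosh b = cosh a * cosh c - sinh a * sinh c * cos be \<and>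
     cosh c = cosh a * cosh b - sinh a * sinh b * cos ga"

definition hyp_area :: "real \<Rightarrow> real \<Rightarrow> real \<Rightarrow> real" where
  "hyp_area al be ga = pi - al - be - ga"

definition hyp_heron :: "real \<Rightarrow> real \<Rightarrow> real \<Rightarrow> real \<Rightarrow> real \<Rightarrow> real \<Rightarrow> bool" where
  "hyp_heron a b c al be ga \<longleftrightarrow>
     hyp_triangle a b c al be ga \<and>
     exp a \<in> \<rat> \<and> exp b \<in> \<rat> \<and> exp c \<in> \<rat> \<and>
     cos al \<in> \<rat> \<and> sin al \<in> \<rat> \<and> cos be \<in> \<rat> \<and> sin be \<in> \<rat> \<and>
     cos ga \<in> \<rat> \<and> sin ga \<in> \<rat> \<and>
     cos (hyp_area al be ga) \<in> \<rat> \<and> sin (hyp_area al be ga) \<in> \<rat>"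

end

theory Submission
  imports Defs
begin

lemma rat_cosh: "exp (t::real) \<in> \<rat> \<Longrightarrow> cosh t \<in> \<rat>"
  by (simp add: cosh_field_def exp_minus Rats_add Rats_divide Rats_inverse)

lemma rat_sinh: "exp (t::real) \<in> \<rat> \<Longrightarrow> sinh t \<in> \<rat>"
  by (simp add: sinh_field_def exp_minus Rats_diff Rats_divide Rats_inverse)

lemma cosh_gt1: "(t::real) > 0 \<Longrightarrow> cosh t > 1"
  using cosh_real_ge_1[of t] cosh_real_one_iff[of t] by (metis less_le less_irrefl)

theorem mainTheorem7:
  fixes a b c al be ga :: real
  assumes tri: "hyp_triangle a b c al be ga"
    and ea: "exp a \<in> \<rat>" and eb: "exp b \<in> \<rat>" and ec: "exp c \<in> \<rat>"
  defines "D2 \<equiv> sin al * sinh b * sinh c"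
  shows "cos al \<in> \<rat> \<and> cos be \<in> \<rat> \<and> cos ga \<in> \<rat>
    \<and> D2 = sin be * sinh a * sinh c \<and> D2 = sin ga * sinh a * sinh b
    \<and> (\<exists>r\<in>\<rat>. sin (hyp_area al be ga) = r * D2)
    \<and> (D2 \<in> \<rat> \<longleftrightarrow> (sin al \<in> \<rat> \<and> sin be \<in> \<rat> \<and> sin ga \<in> \<rat>))
    \<and> ((sin al \<in> \<rat> \<and> sin be \<in> \<rat> \<and> sin ga \<in> \<rat>) \<longleftrightarrow> sin (hyp_area al be ga) \<in> \<rat>)
    \<and> (sin (hyp_area al be ga) \<in> \<rat> \<longrightarrow> hyp_heron a b c al be ga)"
proof -
  define x where "x = cosh a"
  define y where "y = cosh b"
  define z where "z = cosh c"
  define X where "X = sinh a"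
  define Y where "Y = sinh b"
  define Z where "Z = sinh c"
  define ca where "ca = cos al"
  define cb where "cb = cos be"
  define cg where "cg = cos ga"
  define sa where "sa = sin al"
  define sb where "sb = sin be"
  define sg where "sg = sin ga"
  note tri' = tri[unfolded hyp_triangle_def]
  have pos: "0 < a" "0 < b" "0 < c" "0 < al" "al < pi" "0 < be" "be < pi" "0 < ga" "ga < pi"
    using tri' by blast+
  have law: "cosh a = cosh b * cosh c - sinh b * sinh c * cos al"
     "cosh b = cosh a * cosh c - sinh a * sinh c * cos be"
     "cosh c = cosh a * cosh b - sinh a * sinh b * cos ga" using tri' by blast+
  have xQ: "x \<in> \<rat>" "y \<in> \<rat>" "z \<in> \<rat>" unfolding x_def y_def z_def using rat_cosh ea eb ec by auto
  have XQ: "X \<in> \<rat>" "Y \<in> \<rat>" "Z \<in> \<rat>" unfolding X_def Y_def Z_def using rat_sinh ea eb ec by auto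
  have Xp: "X > 0" "Y > 0" "Z > 0" unfolding X_def Y_def Z_def using pos by auto
  have x1: "x > 1" "y > 1" "z > 1" unfolding x_def y_def z_def using pos cosh_gt1 by auto
  have X2: "X^2 = x^2 - 1" "Y^2 = y^2 - 1" "Z^2 = z^2 - 1"
    unfolding X_def Y_def Z_def x_def y_def z_def by (simp_all add: sinh_square_eq)
  have sp: "sa > 0" "sb > 0" "sg > 0" unfolding sa_def sb_def sg_def using pos by (simp_all add: sin_gt_zero)
  have pyt: "sa^2 + ca^2 = 1" "sb^2 + cb^2 = 1" "sg^2 + cg^2 = 1"
    unfolding sa_def sb_def sg_def ca_def cb_def cg_def by simp_all
  have la: "ca * (Y*Z) = y*z - x" unfolding ca_def x_def y_def z_def Y_def Z_def using law(1)
    by (simp add: algebra_simps)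
  have lb: "cb * (X*Z) = x*z - y" unfolding cb_def x_def y_def z_def X_def Z_def using law(2)
    by (simp add: algebra_simps)
  have lg: "cg * (X*Y) = x*y - z" unfolding cg_def x_def y_def z_def X_def Y_def using law(3)
    by (simp add: algebra_simps)
  have caQ: "ca \<in> \<rat>"
  proof -
    have "ca = (y*z - x) / (Y*Z)" using la Xp by (simp add: field_simps)
    thus ?thesis using xQ XQ by (simp add: Rats_diff Rats_mult Rats_divide)
  qed
  have cbQ: "cb \<in> \<rat>"
  proof -
    have "cb = (x*z - y) / (X*Z)" using lb Xp by (simp add: field_simps)
    thus ?thesis using xQ XQ by (simp add: Rats_diff Rats_mult Rats_divide)
  qed
  have cgQ: "cg \<in> \<rat>"
  proof -
    have "cg = (x*y - z) / (X*Y)" using lg Xp by (simp add: field_simps)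
    thus ?thesis using xQ XQ by (simp add: Rats_diff Rats_mult Rats_divide)
  qed
  define Dl where "Dl = 1 + 2*x*y*z - x^2 - y^2 - z^2"
  have DlQ: "Dl \<in> \<rat>" using xQ unfolding Dl_def by (simp add: Rats_diff Rats_mult Rats_add)
  have sqa: "(sa*Y*Z)^2 = Dl"
  proof -
    have "(sa*Y*Z)^2 = Y^2*Z^2 - (ca*(Y*Z))^2"
    proof -
      have "sa^2 = 1 - ca^2" using pyt(1) by simp
      hence "(sa*Y*Z)^2 = (1 - ca^2)*Y^2*Z^2" by (simp add: power_mult_distrib)
      thus ?thesis by (simp add: algebra_simps power_mult_distrib)
    qed
    also have "\<dots> = Dl" unfolding la X2 Dl_def by algebra
    finally show ?thesis .
  qed
  have sqb: "(sb*X*Z)^2 = Dl"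
  proof -
    have "(sb*X*Z)^2 = X^2*Z^2 - (cb*(X*Z))^2"
    proof -
      have "sb^2 = 1 - cb^2" using pyt(2) by simp
      hence "(sb*X*Z)^2 = (1 - cb^2)*X^2*Z^2" by (simp add: power_mult_distrib)
      thus ?thesis by (simp add: algebra_simps power_mult_distrib)
    qed
    also have "\<dots> = Dl" unfolding lb X2 Dl_def by algebra
    finally show ?thesis .
  qed
  have sqg: "(sg*X*Y)^2 = Dl"
  proof -
    have "(sg*X*Y)^2 = X^2*Y^2 - (cg*(X*Y))^2"
    proof -
      have "sg^2 = 1 - cg^2" using pyt(3) by simp
      hence "(sg*X*Y)^2 = (1 - cg^2)*X^2*Y^2" by (simp add: power_mult_distrib)
      thus ?thesis by (simp add: algebra_simps power_mult_distrib)
    qed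
    also have "\<dots> = Dl" unfolding lg X2 Dl_def by algebra
    finally show ?thesis .
  qed
  have D: "D2 = sa*Y*Z" unfolding D2_def sa_def Y_def Z_def by simp
  have Dpos: "D2 > 0" using D sp Xp by simp
  have Db: "D2 = sb*X*Z"
    using sqa sqb D Dpos sp Xp by (metis power2_eq_imp_eq less_le mult_pos_pos)
  have Dg: "D2 = sg*X*Y"
    using sqa sqg D Dpos sp Xp by (metis power2_eq_imp_eq less_le mult_pos_pos)
  define SA where "SA = sin (hyp_area al be ga)"
  have SA: "SA = sa*cb*cg + ca*sb*cg + ca*cb*sg - sa*sb*sg"
  proof -
    have "hyp_area al be ga = pi - (al + (be + ga))" unfolding hyp_area_def by simp
    hence "SA = sin (al + (be + ga))" unfolding SA_def by simp
    thus ?thesis unfolding sa_def sb_def sg_def ca_def cb_def cg_def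
      by (simp add: sin_add cos_add algebra_simps)
  qed
  define e where "e = (x-1)*(y-1)*(z-1)*(1+x+y+z)"
  have key: "SA * (X^2*Y^2*Z^2) = D2 * e"
  proof -
    have "SA * (X^2*Y^2*Z^2) = (sa*Y*Z)*(cb*(X*Z))*(cg*(X*Y)) + (ca*(Y*Z))*(sb*X*Z)*(cg*(X*Y))
        + (ca*(Y*Z))*(cb*(X*Z))*(sg*X*Y) - (sa*Y*Z)*(sb*X*Z)*(sg*X*Y)"
      unfolding SA by (simp add: algebra_simps power2_eq_square)
    also have "\<dots> = D2*((x*z-y)*(x*y-z) + (y*z-x)*(x*y-z) + (y*z-x)*(x*z-y) - D2^2)"
      unfolding la lb lg D[symmetric] Db[symmetric] Dg[symmetric] by algebra
    also have "\<dots> = D2 * e" unfolding D sqa unfolding Dl_def e_def by algebra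
    finally show ?thesis .
  qed
  define r where "r = e / ((x^2-1)*(y^2-1)*(z^2-1))"
  have rQ: "r \<in> \<rat>" unfolding r_def e_def using xQ
    by (simp add: Rats_diff Rats_mult Rats_add Rats_divide)
  have epos: "e > 0" unfolding e_def using x1 by simp
  have den: "(x^2-1)*(y^2-1)*(z^2-1) > 0" using Xp X2[symmetric] by simp
  have rne: "r \<noteq> 0" unfolding r_def using epos den by (metis divide_eq_0_iff less_irrefl)
  have SAr: "SA = r * D2"
    using key den unfolding r_def X2 by (simp add: field_simps)
  have i_ii: "D2 \<in> \<rat> \<longleftrightarrow> (sa \<in> \<rat> \<and> sb \<in> \<rat> \<and> sg \<in> \<rat>)"
  proof
    assume h: "D2 \<in> \<rat>"
    have "sa = D2/(Y*Z)" using D Xp by simp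
    moreover have "sb = D2/(X*Z)" using Db Xp by simp
    moreover have "sg = D2/(X*Y)" using Dg Xp by simp
    ultimately show "sa \<in> \<rat> \<and> sb \<in> \<rat> \<and> sg \<in> \<rat>" using h XQ by (simp add: Rats_mult Rats_divide)
  next
    assume "sa \<in> \<rat> \<and> sb \<in> \<rat> \<and> sg \<in> \<rat>"
    thus "D2 \<in> \<rat>" using D XQ by (simp add: Rats_mult)
  qed
  have i_iii: "D2 \<in> \<rat> \<longleftrightarrow> SA \<in> \<rat>"
  proof
    assume "D2 \<in> \<rat>" thus "SA \<in> \<rat>" using SAr rQ by (simp add: Rats_mult)
  next
    assume "SA \<in> \<rat>"
    moreover have "D2 = SA / r" using SAr rne by simp
    ultimately show "D2 \<in> \<rat>" using rQ by (simp add: Rats_divide)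
  qed
  have heron: "SA \<in> \<rat> \<Longrightarrow> hyp_heron a b c al be ga"
  proof -
    assume h: "SA \<in> \<rat>"
    hence s: "sa \<in> \<rat>" "sb \<in> \<rat>" "sg \<in> \<rat>" using i_ii i_iii by auto
    have "hyp_area al be ga = pi - (al + (be + ga))" unfolding hyp_area_def by simp
    hence "cos (hyp_area al be ga) = - (ca*(cb*cg - sb*sg) - sa*(sb*cg + cb*sg))"
      unfolding sa_def sb_def sg_def ca_def cb_def cg_def by (simp add: sin_add cos_add)
    hence "cos (hyp_area al be ga) \<in> \<rat>" using s caQ cbQ cgQ
      by (simp add: Rats_mult Rats_diff Rats_add Rats_minus_iff)
    thus ?thesis using h s caQ cbQ cgQ tri ea eb ec unfolding hyp_heron_def SA_def sa_def sb_def sg_def ca_def cb_def cg_def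
      by simp
  qed
  show ?thesis
    using caQ cbQ cgQ Db Dg SAr rQ i_ii i_iii heron
    unfolding SA_def sa_def sb_def sg_def ca_def cb_def cg_def X_def Y_def Z_def
    by blast
qed

end
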